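(* Let $A\subset\omega$ be co-infinite and let $u_0,\dots,u_n\in\mathcal M$ be such that $\bigcup_{k=0}^nu_k(A)$ is co-infinite. Then there exists $\chi\in\mathcal M_A$ such that $\bigcup_{k=0}^n\mathrm{im}(u_k\chi)$ is co-infinite.
   Context: $\omega=\{1,2,\dots\}$, $\mathcal M$ the monoid of injections $\omega\to\omega$, and $\mathcal M_A$ the submonoid of injections fixing $A\subset\omega$ elementwise. A subset of $\omega$ is co-infinite if its complement in $\omega$ is infinite. *)

theory Defs
  imports Main
begin

definition omega :: "nat set" where
  "omega = {n. 1 \<le> n}"

text \<open>The monoid of injections omega to omega (functions considered on omega only).\<close>
definition injM :: "(nat \<Rightarrow> nat) set" where
  "injM = {f. inj_on f omega \<and> f ` omega \<subseteq> omega}"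

definition injM_fix :: "nat set \<Rightarrow> (nat \<Rightarrow> nat) set" where
  "injM_fix A = {f \<in> injM. \<forall>a\<in>A. f a = a}"

definition coinfinite :: "nat set \<Rightarrow> bool" where
  "coinfinite S \<longleftrightarrow> infinite (omega - S)"

end

theory Submission
  imports Defs "HOL-Library.Infinite_Set"
begin

definition nw :: "(nat \<Rightarrow> nat \<Rightarrow> nat) \<Rightarrow> nat \<Rightarrow> nat set \<Rightarrow> nat set \<Rightarrow> nat set \<Rightarrow> nat" where
  "nw u n W0 Cs Ws = (LEAST w. w \<in> W0 \<and> w \<notin> Ws \<and> (\<forall>k\<le>n. w \<notin> u k ` Cs))"

definition nc :: "(nat \<Rightarrow> nat \<Rightarrow> nat) \<Rightarrow> nat \<Rightarrow> nat set \<Rightarrow> nat set \<Rightarrow> nat set \<Rightarrow> nat" where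
  "nc u n B Cs Ws = (LEAST c. c \<in> B \<and> c \<notin> Cs \<and> (\<forall>k\<le>n. u k c \<notin> Ws))"

primrec st :: "(nat \<Rightarrow> nat \<Rightarrow> nat) \<Rightarrow> nat \<Rightarrow> nat set \<Rightarrow> nat set \<Rightarrow> nat \<Rightarrow> nat set \<times> nat set" where
  "st u n B W0 0 = ({}, {})"
| "st u n B W0 (Suc m) =
    (let Cs = fst (st u n B W0 m); Ws0 = snd (st u n B W0 m);
         Ws = insert (nw u n W0 Cs Ws0) Ws0
     in (insert (nc u n B Cs Ws) Cs, Ws))"

lemma nw_ex:
  fixes u :: "nat \<Rightarrow> nat \<Rightarrow> nat"
  assumes "finite Cs" "finite Ws" "infinite W0"
  shows "\<exists>w. w \<in> W0 \<and> w \<notin> Ws \<and> (\<forall>k\<le>n. w \<notin> u k ` Cs)"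
proof -
  have "finite (Ws \<union> (\<Union>k\<le>n. u k ` Cs))" using assms by simp
  then have "infinite (W0 - (Ws \<union> (\<Union>k\<le>n. u k ` Cs)))"
    by (rule Diff_infinite_finite[OF _ assms(3)])
  then have "W0 - (Ws \<union> (\<Union>k\<le>n. u k ` Cs)) \<noteq> {}" by (rule infinite_imp_nonempty)
  then obtain w where "w \<in> W0 - (Ws \<union> (\<Union>k\<le>n. u k ` Cs))"
    by (meson ex_in_conv)
  then have "w \<in> W0 \<and> w \<notin> Ws \<and> (\<forall>k\<le>n. w \<notin> u k ` Cs)" by simp
  then show ?thesis by (rule exI)
qed

lemma nc_ex:
  fixes u :: "nat \<Rightarrow> nat \<Rightarrow> nat"
  assumes "finite Cs" "finite Ws" "infinite B" "B \<subseteq> omega"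
    and "\<forall>k\<le>n. inj_on (u k) omega"
  shows "\<exists>c. c \<in> B \<and> c \<notin> Cs \<and> (\<forall>k\<le>n. u k c \<notin> Ws)"
proof -
  have "\<And>k. k \<le> n \<Longrightarrow> finite (u k -` Ws \<inter> omega)"
    using assms(2,5) finite_vimage_IntI by blast
  then have "finite (Cs \<union> (\<Union>k\<le>n. (u k -` Ws \<inter> omega)))"
    using assms(1) by (simp only: finite_Un finite_UN finite_atMost) blast
  then have "infinite (B - (Cs \<union> (\<Union>k\<le>n. (u k -` Ws \<inter> omega))))"
    by (rule Diff_infinite_finite[OF _ assms(3)])
  then have "B - (Cs \<union> (\<Union>k\<le>n. (u k -` Ws \<inter> omega))) \<noteq> {}" by (rule infinite_imp_nonempty)
  then obtain c where "c \<in> B - (Cs \<union> (\<Union>k\<le>n. (u k -` Ws \<inter> omega)))"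
    by (meson ex_in_conv)
  then have "c \<in> B \<and> c \<notin> Cs \<and> (\<forall>k\<le>n. u k c \<notin> Ws)" using assms(4) by auto
  then show ?thesis by (rule exI)
qed

lemma st_inv:
  assumes "infinite B" "B \<subseteq> omega" "\<forall>k\<le>n. inj_on (u k) omega" "infinite W0"
  shows "finite (fst (st u n B W0 m)) \<and> finite (snd (st u n B W0 m))
     \<and> card (fst (st u n B W0 m)) = m \<and> card (snd (st u n B W0 m)) = m
     \<and> fst (st u n B W0 m) \<subseteq> B \<and> snd (st u n B W0 m) \<subseteq> W0
     \<and> (\<forall>c\<in>fst (st u n B W0 m). \<forall>k\<le>n. u k c \<notin> snd (st u n B W0 m))"
proof (induction m)
  case 0
  then show ?case by simp
next
  case (Suc m)
  define Cs where "Cs = fst (st u n B W0 m)"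
  define Ws0 where "Ws0 = snd (st u n B W0 m)"
  define w where "w = nw u n W0 Cs Ws0"
  define c where "c = nc u n B Cs (insert w Ws0)"
  have IH: "finite Cs" "finite Ws0" "card Cs = m" "card Ws0 = m" "Cs \<subseteq> B" "Ws0 \<subseteq> W0"
    "\<forall>c\<in>Cs. \<forall>k\<le>n. u k c \<notin> Ws0"
    using Suc.IH unfolding Cs_def Ws0_def by auto
  have w: "w \<in> W0 \<and> w \<notin> Ws0 \<and> (\<forall>k\<le>n. w \<notin> u k ` Cs)"
    unfolding w_def nw_def
    by (rule LeastI_ex, rule nw_ex) (use IH assms in auto)
  have c: "c \<in> B \<and> c \<notin> Cs \<and> (\<forall>k\<le>n. u k c \<notin> insert w Ws0)"
    unfolding c_def nc_def
    by (rule LeastI_ex, rule nc_ex) (use IH assms in auto)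
  have eq: "st u n B W0 (Suc m) = (insert c Cs, insert w Ws0)"
    by (simp add: Let_def Cs_def Ws0_def w_def c_def)
  show ?case unfolding eq using IH w c by auto
qed

lemma st_mono:
  assumes "m \<le> m'"
  shows "fst (st u n B W0 m) \<subseteq> fst (st u n B W0 m')"
    and "snd (st u n B W0 m) \<subseteq> snd (st u n B W0 m')"
proof -
  show "fst (st u n B W0 m) \<subseteq> fst (st u n B W0 m')"
    by (rule lift_Suc_mono_le[of "\<lambda>m. fst (st u n B W0 m)", OF _ assms]) (simp add: Let_def subset_insertI)
  show "snd (st u n B W0 m) \<subseteq> snd (st u n B W0 m')"
    by (rule lift_Suc_mono_le[of "\<lambda>m. snd (st u n B W0 m)", OF _ assms]) (simp add: Let_def subset_insertI)
qed

lemma infinite_from_card: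
  assumes "\<And>m. finite (F m) \<and> card (F m) = m" "\<And>m. F m \<subseteq> S"
  shows "infinite S"
proof
  assume "finite S"
  then have "card (F (Suc (card S))) \<le> card S" using assms(2) card_mono by blast
  then show False using assms(1)[of "Suc (card S)"] by simp
qed

theorem proposition2p7:
  fixes A :: "nat set" and u :: "nat \<Rightarrow> nat \<Rightarrow> nat" and n :: nat
  assumes "A \<subseteq> omega"
    and "coinfinite A"
    and "\<forall>k\<le>n. u k \<in> injM"
    and "coinfinite (\<Union>k\<le>n. u k ` A)"
  shows "\<exists>\<chi>\<in>injM_fix A. coinfinite (\<Union>k\<le>n. (u k \<circ> \<chi>) ` omega)"
proof -
  define B where "B = omega - A"
  define U where "U = (\<Union>k\<le>n. u k ` A)"
  define W0 where "W0 = omega - U"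
  have iB: "infinite B" using assms(2) unfolding B_def coinfinite_def .
  have iW0: "infinite W0" using assms(4) unfolding W0_def U_def coinfinite_def .
  have Bo: "B \<subseteq> omega" unfolding B_def by auto
  have inj: "\<forall>k\<le>n. inj_on (u k) omega" and img: "\<forall>k\<le>n. u k ` omega \<subseteq> omega"
    using assms(3) unfolding injM_def by auto
  note I = st_inv[OF iB Bo inj iW0]
  have I1: "\<And>m. finite (fst (st u n B W0 m)) \<and> card (fst (st u n B W0 m)) = m" using I by simp
  have I2: "\<And>m. finite (snd (st u n B W0 m)) \<and> card (snd (st u n B W0 m)) = m" using I by simp
  have I3: "\<And>m. fst (st u n B W0 m) \<subseteq> B" using I by simp
  have I4: "\<And>m. snd (st u n B W0 m) \<subseteq> W0" using I by simp
  have I5: "\<And>m c k. c \<in> fst (st u n B W0 m) \<Longrightarrow> k \<le> n \<Longrightarrow> u k c \<notin> snd (st u n B W0 m)"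
    using I by simp
  define C where "C = (\<Union>m. fst (st u n B W0 m))"
  define W where "W = (\<Union>m. snd (st u n B W0 m))"
  have CB: "C \<subseteq> B" unfolding C_def using I3 by (simp add: UN_least)
  have WW0: "W \<subseteq> W0" unfolding W_def using I4 by (simp add: UN_least)
  have iC: "infinite C"
    by (rule infinite_from_card[where F="\<lambda>m. fst (st u n B W0 m)"]) (use I1 C_def in auto)
  have iW: "infinite W"
    by (rule infinite_from_card[where F="\<lambda>m. snd (st u n B W0 m)"]) (use I2 W_def in auto)
  have sep: "\<forall>c\<in>C. \<forall>k\<le>n. u k c \<notin> W"
  proof (intro ballI allI impI notI)
    fix c k assume "c \<in> C" "k \<le> n" "u k c \<in> W"
    then obtain i j where "c \<in> fst (st u n B W0 i)" "u k c \<in> snd (st u n B W0 j)"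
      unfolding C_def W_def by blast
    then have "c \<in> fst (st u n B W0 (max i j))" "u k c \<in> snd (st u n B W0 (max i j))"
      using st_mono(1)[of i "max i j" u n B W0] st_mono(2)[of j "max i j" u n B W0] by auto
    then show False using I5 \<open>k \<le> n\<close> by blast
  qed
  define \<chi> where "\<chi> = (\<lambda>x. if x \<in> A then x else enumerate C x)"
  have eC: "\<And>x. enumerate C x \<in> C" using enumerate_in_set[OF iC] .
  have smC: "strict_mono (enumerate C)" using strict_mono_enumerate[OF iC] .
  have injE: "inj (enumerate C)" using smC strict_mono_imp_inj_on by blast
  have CA: "C \<inter> A = {}" using CB unfolding B_def by auto
  have "inj_on \<chi> omega"
  proof (rule inj_onI)
    fix x y assume "x \<in> omega" "y \<in> omega" "\<chi> x = \<chi> y"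
    show "x = y"
    proof (cases "x \<in> A"; cases "y \<in> A")
      assume "x \<in> A" "y \<in> A" then show ?thesis using \<open>\<chi> x = \<chi> y\<close> unfolding \<chi>_def by simp
    next
      assume "x \<in> A" "y \<notin> A" then show ?thesis using \<open>\<chi> x = \<chi> y\<close> eC[of y] CA unfolding \<chi>_def by auto
    next
      assume "x \<notin> A" "y \<in> A" then show ?thesis using \<open>\<chi> x = \<chi> y\<close> eC[of x] CA unfolding \<chi>_def by auto
    next
      assume "x \<notin> A" "y \<notin> A" then have "enumerate C x = enumerate C y" using \<open>\<chi> x = \<chi> y\<close> unfolding \<chi>_def by simp
      then show ?thesis using injE by (rule injD[rotated])
    qed
  qed
  moreover have "\<chi> ` omega \<subseteq> omega" unfolding \<chi>_def using eC CB Bo assms(1) by auto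
  moreover have "\<forall>a\<in>A. \<chi> a = a" unfolding \<chi>_def by simp
  ultimately have chiM: "\<chi> \<in> injM_fix A" unfolding injM_fix_def injM_def by auto
  have "W \<subseteq> omega - (\<Union>k\<le>n. (u k \<circ> \<chi>) ` omega)"
  proof
    fix w assume w: "w \<in> W"
    then have "w \<in> omega" "w \<notin> U" using WW0 unfolding W0_def by auto
    moreover have "w \<notin> (\<Union>k\<le>n. (u k \<circ> \<chi>) ` omega)"
    proof
      assume "w \<in> (\<Union>k\<le>n. (u k \<circ> \<chi>) ` omega)"
      then obtain k x where k: "k \<le> n" "x \<in> omega" "w = u k (\<chi> x)" by auto
      show False
      proof (cases "x \<in> A")
        case True
        then show ?thesis using k \<open>w \<notin> U\<close> unfolding U_def \<chi>_def by auto
      next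
        case False
        then show ?thesis using k sep w eC unfolding \<chi>_def by auto
      qed
    qed
    ultimately show "w \<in> omega - (\<Union>k\<le>n. (u k \<circ> \<chi>) ` omega)" by blast
  qed
  then have "coinfinite (\<Union>k\<le>n. (u k \<circ> \<chi>) ` omega)"
    unfolding coinfinite_def using iW infinite_super by blast
  then show ?thesis using chiM by blast
qed

end
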